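(* For every integer $n\ge 3$ there exist integers $j$ with $2\le j\le\lceil n/2\rceil$ and $k$ with $0\le k<\lceil\frac{n-2}{3}\rceil$ such that every doubling minimizer $\mu$ on $L_n$ satisfies $$\frac{\mu(B(j,1))}{\mu(B(j,0))}=\frac{\mu(B(1,2k+1))}{\mu(B(1,k))}=C_\mu.$$
   Context: $L_n$ is the path graph with vertices $\{1,\dots,n\}$ and edges $\{j,j+1\}$, with distance $|i-j|$. A measure $\mu$ on $L_n$ is a weight function $\mu:\{1,\dots,n\}\to(0,\infty)$, $\mu(A)=\sum_{v\in A}\mu(v)$. Closed balls: $B(x,r)=\{y:|x-y|\le r\}$. $C_\mu=\sup\{\mu(B(x,2k+1))/\mu(B(x,k)):1\le x\le n,\ k\ge 0\}$, $C_{L_n}=\inf_\mu C_\mu$. A doubling minimizer on $L_n$ is a measure $\mu$ with $C_\mu=C_{L_n}$. *)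

theory Defs
  imports "HOL-Analysis.Analysis"
begin

text \<open>Path graph L_n: vertex set {1..n}, distance |i - j|.
  A measure is a weight function positive on {1..n} (values outside are irrelevant).\<close>

definition is_measure :: "nat \<Rightarrow> (nat \<Rightarrow> real) \<Rightarrow> bool" where
  "is_measure n \<mu> \<longleftrightarrow> (\<forall>v\<in>{1..n}. \<mu> v > 0)"

definition ball_L :: "nat \<Rightarrow> nat \<Rightarrow> nat \<Rightarrow> nat set" where
  "ball_L n x r = {y \<in> {1..n}. \<bar>int x - int y\<bar> \<le> int r}"

definition meas :: "(nat \<Rightarrow> real) \<Rightarrow> nat set \<Rightarrow> real" where
  "meas \<mu> A = (\<Sum>v\<in>A. \<mu> v)"

definition doubling_const :: "nat \<Rightarrow> (nat \<Rightarrow> real) \<Rightarrow> real" where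
  "doubling_const n \<mu> =
     Sup {meas \<mu> (ball_L n x (2*k+1)) / meas \<mu> (ball_L n x k) | x k. x \<in> {1..n}}"

definition doubling_const_graph :: "nat \<Rightarrow> real" where
  "doubling_const_graph n = Inf {doubling_const n \<mu> | \<mu>. is_measure n \<mu>}"

definition doubling_minimizer :: "nat \<Rightarrow> (nat \<Rightarrow> real) \<Rightarrow> bool" where
  "doubling_minimizer n \<mu> \<longleftrightarrow> is_measure n \<mu> \<and> doubling_const n \<mu> = doubling_const_graph n"

end

theory Submission
  imports Defs
begin

lemma ball_L_eq: "ball_L n x r = {max 1 (x - r) .. min n (x + r)}"
  unfolding ball_L_def by auto

lemma ball_sub: "ball_L n x r \<subseteq> {1..n}"
  unfolding ball_L_def by auto

lemma ball_fin: "finite (ball_L n x r)"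
  by (rule finite_subset[OF ball_sub finite_atLeastAtMost])

lemma center_in_ball: "x \<in> {1..n} \<Longrightarrow> x \<in> ball_L n x r"
  unfolding ball_L_def by auto

lemma meas_add: "meas (\<lambda>v. f v + g v) A = meas f A + meas g A"
  unfolding meas_def by (simp add: sum.distrib)

lemma meas_scale: "meas (\<lambda>v. t * f v) A = t * meas f A"
  unfolding meas_def by (simp add: sum_distrib_left)

lemma meas_pos:
  assumes "is_measure n \<mu>" "x \<in> {1..n}"
  shows "0 < meas \<mu> (ball_L n x r)"
proof -
  have "\<forall>v\<in>ball_L n x r. 0 < \<mu> v" using assms(1) ball_sub unfolding is_measure_def by blast
  then show ?thesis unfolding meas_def
    using sum_pos[OF ball_fin] center_in_ball[OF assms(2)] by blast
qed

lemma meas_nonneg: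
  assumes "is_measure n \<mu>" "A \<subseteq> {1..n}"
  shows "0 \<le> meas \<mu> A"
  unfolding meas_def
  using assms unfolding is_measure_def
  by (intro sum_nonneg) (auto simp: less_imp_le)

lemma meas_mono:
  assumes "is_measure n \<mu>" "A \<subseteq> B" "B \<subseteq> {1..n}"
  shows "meas \<mu> A \<le> meas \<mu> B"
proof -
  have fB: "finite B" by (rule finite_subset[OF assms(3) finite_atLeastAtMost])
  have "\<forall>v\<in>B - A. 0 \<le> \<mu> v" using assms unfolding is_measure_def by (auto simp: less_imp_le)
  then show ?thesis unfolding meas_def using sum_mono2[OF fB assms(2)] by blast
qed

lemma ball_big:
  assumes "x \<in> {1..n}" "n \<le> k"
  shows "ball_L n x k = {1..n}"
proof -
  have "x - k = 0" using assms by simp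
  moreover have "min n (x + k) = n" using assms by simp
  ultimately show ?thesis by (simp add: ball_L_eq)
qed

definition ratio :: "nat \<Rightarrow> (nat \<Rightarrow> real) \<Rightarrow> nat \<Rightarrow> nat \<Rightarrow> real" where
  "ratio n \<mu> x k = meas \<mu> (ball_L n x (2*k+1)) / meas \<mu> (ball_L n x k)"

lemma ratio_big: "x \<in> {1..n} \<Longrightarrow> n \<le> k \<Longrightarrow> ratio n \<mu> x k = ratio n \<mu> x n"
  unfolding ratio_def by (simp add: ball_big)

lemma ratio_min: "x \<in> {1..n} \<Longrightarrow> ratio n \<mu> x k = ratio n \<mu> x (min k n)"
  using ratio_big[of x n k \<mu>] by (cases "k \<le> n") (auto simp: min_def)

definition Rset :: "nat \<Rightarrow> (nat \<Rightarrow> real) \<Rightarrow> real set" where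
  "Rset n \<mu> = {meas \<mu> (ball_L n x (2*k+1)) / meas \<mu> (ball_L n x k) | x k. x \<in> {1..n}}"

lemma Rset_mem: "r \<in> Rset n \<mu> \<longleftrightarrow> (\<exists>x k. x \<in> {1..n} \<and> r = ratio n \<mu> x k)"
  unfolding Rset_def ratio_def by blast

lemma Rset_sub: "Rset n \<mu> \<subseteq> (\<lambda>p. ratio n \<mu> (fst p) (snd p)) ` ({1..n} \<times> {..n})"
proof
  fix r assume "r \<in> Rset n \<mu>"
  then obtain x k where xk: "x \<in> {1..n}" "r = ratio n \<mu> x k" unfolding Rset_mem by blast
  have e: "r = ratio n \<mu> x (min k n)" using xk ratio_min by metis
  show "r \<in> (\<lambda>p. ratio n \<mu> (fst p) (snd p)) ` ({1..n} \<times> {..n})"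
  proof (rule image_eqI[where x="(x, min k n)"])
    show "r = ratio n \<mu> (fst (x, min k n)) (snd (x, min k n))" using e by simp
    show "(x, min k n) \<in> {1..n} \<times> {..n}" using xk(1) by simp
  qed
qed

lemma Rset_fin: "finite (Rset n \<mu>)"
  by (rule finite_subset[OF Rset_sub]) simp

lemma dc_Rset: "doubling_const n \<mu> = Sup (Rset n \<mu>)"
  unfolding doubling_const_def Rset_def ..

lemma dc_upper:
  assumes "x \<in> {1..n}"
  shows "ratio n \<mu> x k \<le> doubling_const n \<mu>"
proof -
  have mem: "ratio n \<mu> x k \<in> Rset n \<mu>" unfolding Rset_mem using assms by blast
  show ?thesis unfolding dc_Rset by (rule cSup_upper[OF mem bdd_above_finite[OF Rset_fin]])
qed

lemma dc_attained:
  assumes "1 \<le> n"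
  shows "\<exists>x\<in>{1..n}. \<exists>k\<le>n. doubling_const n \<mu> = ratio n \<mu> x k"
proof -
  have "ratio n \<mu> 1 0 \<in> Rset n \<mu>" unfolding Rset_mem using assms by auto
  then have ne: "Rset n \<mu> \<noteq> {}" by blast
  have "Sup (Rset n \<mu>) = Max (Rset n \<mu>)" by (rule cSup_eq_Max[OF Rset_fin ne])
  moreover have "Max (Rset n \<mu>) \<in> Rset n \<mu>" by (rule Max_in[OF Rset_fin ne])
  ultimately have "doubling_const n \<mu> \<in> Rset n \<mu>" unfolding dc_Rset by simp
  then obtain x k where xk: "x \<in> {1..n}" "doubling_const n \<mu> = ratio n \<mu> x k"
    unfolding Rset_mem by blast
  then have "doubling_const n \<mu> = ratio n \<mu> x (min k n)" using ratio_min by metis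
  moreover have "min k n \<le> n" by simp
  ultimately show ?thesis using xk(1) by blast
qed

lemma ratio_nonneg: "is_measure n \<mu> \<Longrightarrow> 0 \<le> ratio n \<mu> x k"
  unfolding ratio_def using meas_nonneg[OF _ ball_sub] by (simp add: divide_nonneg_nonneg)

lemma dcg_le:
  assumes "1 \<le> n" "is_measure n \<mu>"
  shows "doubling_const_graph n \<le> doubling_const n \<mu>"
  unfolding doubling_const_graph_def
proof (rule cInf_lower)
  show "doubling_const n \<mu> \<in> {doubling_const n \<mu> |\<mu>. is_measure n \<mu>}" using assms by blast
  show "bdd_below {doubling_const n \<mu> |\<mu>. is_measure n \<mu>}"
  proof (rule bdd_belowI[where m=0])
    fix y assume "y \<in> {doubling_const n \<mu> |\<mu>. is_measure n \<mu>}"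
    then obtain \<nu> where "is_measure n \<nu>" "y = doubling_const n \<nu>" by blast
    then show "0 \<le> y" using dc_upper[of 1 n \<nu> 0] ratio_nonneg[of n \<nu> 1 0] assms(1) by auto
  qed
qed

lemma dcg_ge:
  assumes "\<And>\<mu>. is_measure n \<mu> \<Longrightarrow> c \<le> doubling_const n \<mu>"
  shows "c \<le> doubling_const_graph n"
  unfolding doubling_const_graph_def
proof (rule cInf_greatest)
  have "is_measure n (\<lambda>_. 1)" by (simp add: is_measure_def)
  show "{doubling_const n \<mu> |\<mu>. is_measure n \<mu>} \<noteq> {}"
    using \<open>is_measure n (\<lambda>_. 1)\<close> by blast
qed (use assms in auto)

definition feas :: "nat \<Rightarrow> real \<Rightarrow> (nat \<Rightarrow> real) \<Rightarrow> bool" where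
  "feas n c \<mu> \<longleftrightarrow> (\<forall>x\<in>{1..n}. \<forall>k. meas \<mu> (ball_L n x (2*k+1)) \<le> c * meas \<mu> (ball_L n x k))"

definition strict :: "nat \<Rightarrow> real \<Rightarrow> (nat \<Rightarrow> real) \<Rightarrow> nat \<Rightarrow> nat \<Rightarrow> bool" where
  "strict n c \<mu> x k \<longleftrightarrow> meas \<mu> (ball_L n x (2*k+1)) < c * meas \<mu> (ball_L n x k)"

lemma min_feas:
  assumes "doubling_minimizer n \<mu>"
  shows "feas n (doubling_const_graph n) \<mu>"
  unfolding feas_def
proof (intro ballI allI)
  fix x k assume x: "x \<in> {1..n}"
  have m: "is_measure n \<mu>" and e: "doubling_const n \<mu> = doubling_const_graph n"
    using assms unfolding doubling_minimizer_def by auto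
  have "ratio n \<mu> x k \<le> doubling_const n \<mu>" by (rule dc_upper[OF x])
  then have "ratio n \<mu> x k \<le> doubling_const_graph n" by (simp only: e)
  then show "meas \<mu> (ball_L n x (2*k+1)) \<le> doubling_const_graph n * meas \<mu> (ball_L n x k)"
    unfolding ratio_def by (simp only: pos_divide_le_eq[OF meas_pos[OF m x]])
qed

lemma feas_min:
  assumes "1 \<le> n" "is_measure n \<mu>" "feas n (doubling_const_graph n) \<mu>"
  shows "doubling_minimizer n \<mu>"
proof -
  obtain x k where x: "x \<in> {1..n}" and e: "doubling_const n \<mu> = ratio n \<mu> x k"
    using dc_attained[OF assms(1)] by blast
  have "meas \<mu> (ball_L n x (2*k+1)) \<le> doubling_const_graph n * meas \<mu> (ball_L n x k)"
    using assms(3) x unfolding feas_def by blast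
  then have "ratio n \<mu> x k \<le> doubling_const_graph n"
    unfolding ratio_def by (simp only: pos_divide_le_eq[OF meas_pos[OF assms(2) x]])
  then have "doubling_const n \<mu> = doubling_const_graph n" using dcg_le[OF assms(1,2)] e by linarith
  then show ?thesis using assms(2) unfolding doubling_minimizer_def by blast
qed

lemma all_strict_False:
  assumes "1 \<le> n" "is_measure n \<nu>" "\<forall>x\<in>{1..n}. \<forall>k\<le>n. strict n (doubling_const_graph n) \<nu> x k"
  shows False
proof -
  obtain x k where x: "x \<in> {1..n}" and k: "k \<le> n" and e: "doubling_const n \<nu> = ratio n \<nu> x k"
    using dc_attained[OF assms(1)] by blast
  have "meas \<nu> (ball_L n x (2*k+1)) < doubling_const_graph n * meas \<nu> (ball_L n x k)"
    using assms(3) x k unfolding strict_def by blast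
  then have "ratio n \<nu> x k < doubling_const_graph n"
    unfolding ratio_def by (simp only: pos_divide_less_eq[OF meas_pos[OF assms(2) x]])
  then show False using dcg_le[OF assms(1,2)] e by linarith
qed

definition rflm :: "nat \<Rightarrow> (nat \<Rightarrow> real) \<Rightarrow> nat \<Rightarrow> real" where
  "rflm n \<mu> v = \<mu> (n + 1 - v)"

definition madd :: "(nat \<Rightarrow> real) \<Rightarrow> (nat \<Rightarrow> real) \<Rightarrow> nat \<Rightarrow> real" where
  "madd \<mu> \<nu> v = \<mu> v + \<nu> v"

lemma ball_rfl:
  assumes "x \<in> {1..n}"
  shows "ball_L n (n+1-x) r = (\<lambda>v. n+1-v) ` ball_L n x r"
proof (intro set_eqI iffI)
  fix y assume "y \<in> ball_L n (n+1-x) r"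
  then have y: "max 1 (n+1-x-r) \<le> y" "y \<le> min n (n+1-x+r)" unfolding ball_L_eq by auto
  have "n+1-y \<in> ball_L n x r" unfolding ball_L_eq using y assms by auto
  moreover have "y = n+1-(n+1-y)" using y by auto
  ultimately show "y \<in> (\<lambda>v. n+1-v) ` ball_L n x r" by blast
next
  fix y assume "y \<in> (\<lambda>v. n+1-v) ` ball_L n x r"
  then obtain v where v: "v \<in> ball_L n x r" "y = n+1-v" by blast
  then have "max 1 (x-r) \<le> v" "v \<le> min n (x+r)" unfolding ball_L_eq by auto
  then show "y \<in> ball_L n (n+1-x) r" unfolding ball_L_eq v(2) using assms by auto
qed

lemma meas_rfl:
  assumes "x \<in> {1..n}"
  shows "meas (rflm n \<mu>) (ball_L n x r) = meas \<mu> (ball_L n (n+1-x) r)"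
proof -
  have x': "n+1-x \<in> {1..n}" using assms by auto
  have e: "ball_L n x r = (\<lambda>v. n+1-v) ` ball_L n (n+1-x) r"
    using ball_rfl[OF x', of r] assms by auto
  have inj: "inj_on (\<lambda>v. n+1-v) (ball_L n (n+1-x) r)"
  proof (rule inj_onI)
    fix a b assume "a \<in> ball_L n (n+1-x) r" "b \<in> ball_L n (n+1-x) r" "n+1-a = n+1-b"
    moreover have "a \<le> n" "b \<le> n" using calculation(1,2) ball_sub[of n "n+1-x" r] by auto
    ultimately show "a = b" by simp
  qed
  have "meas (rflm n \<mu>) (ball_L n x r) = sum (rflm n \<mu>) ((\<lambda>v. n+1-v) ` ball_L n (n+1-x) r)"
    unfolding meas_def by (simp only: e)
  also have "\<dots> = sum (rflm n \<mu> \<circ> (\<lambda>v. n+1-v)) (ball_L n (n+1-x) r)"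
    by (rule sum.reindex[OF inj])
  also have "\<dots> = (\<Sum>v\<in>ball_L n (n+1-x) r. rflm n \<mu> (n+1-v))" by (simp add: comp_def)
  also have "\<dots> = (\<Sum>v\<in>ball_L n (n+1-x) r. \<mu> v)"
  proof (rule sum.cong)
    fix v assume "v \<in> ball_L n (n+1-x) r"
    then have "v \<le> n" using ball_sub by fastforce
    then show "rflm n \<mu> (n+1-v) = \<mu> v" unfolding rflm_def by simp
  qed simp
  finally show ?thesis unfolding meas_def .
qed

lemma is_measure_rfl: "is_measure n \<mu> \<Longrightarrow> is_measure n (rflm n \<mu>)"
  unfolding is_measure_def rflm_def
proof
  fix v assume h: "\<forall>v\<in>{1..n}. 0 < \<mu> v" and v: "v \<in> {1..n}"
  have "n+1-v \<in> {1..n}" using v by auto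
  then show "0 < \<mu> (n+1-v)" using h by blast
qed

lemma feas_rfl: "feas n c \<mu> \<Longrightarrow> feas n c (rflm n \<mu>)"
  unfolding feas_def
proof (intro ballI allI)
  fix x k assume f: "\<forall>x\<in>{1..n}. \<forall>k. meas \<mu> (ball_L n x (2*k+1)) \<le> c * meas \<mu> (ball_L n x k)"
    and x: "x \<in> {1..n}"
  have "n+1-x \<in> {1..n}" using x by auto
  then show "meas (rflm n \<mu>) (ball_L n x (2*k+1)) \<le> c * meas (rflm n \<mu>) (ball_L n x k)"
    using f by (simp add: meas_rfl[OF x])
qed

lemma strict_rfl:
  assumes "x \<in> {1..n}"
  shows "strict n c (rflm n \<mu>) x k \<longleftrightarrow> strict n c \<mu> (n+1-x) k"
  unfolding strict_def by (simp add: meas_rfl[OF assms])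

lemma min_rfl:
  assumes "1 \<le> n" "doubling_minimizer n \<mu>"
  shows "doubling_minimizer n (rflm n \<mu>)"
proof -
  have "is_measure n \<mu>" using assms unfolding doubling_minimizer_def by blast
  then show ?thesis using feas_min[OF assms(1)] is_measure_rfl feas_rfl min_feas[OF assms(2)] by blast
qed

lemma meas_madd: "meas (madd \<mu> \<nu>) A = meas \<mu> A + meas \<nu> A"
  unfolding madd_def by (rule meas_add)

lemma is_measure_madd: "is_measure n \<mu> \<Longrightarrow> is_measure n \<nu> \<Longrightarrow> is_measure n (madd \<mu> \<nu>)"
  unfolding is_measure_def madd_def by (simp add: add_pos_pos)

lemma feas_madd: "feas n c \<mu> \<Longrightarrow> feas n c \<nu> \<Longrightarrow> feas n c (madd \<mu> \<nu>)"
  unfolding feas_def meas_madd by (simp add: distrib_left add_mono)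

lemma strict_madd: "strict n c \<mu> x k \<Longrightarrow> feas n c \<nu> \<Longrightarrow> x \<in> {1..n} \<Longrightarrow> strict n c (madd \<mu> \<nu>) x k"
  unfolding feas_def strict_def meas_madd
  by (smt (verit, best) distrib_left)

lemma strict_madd2: "strict n c \<nu> x k \<Longrightarrow> feas n c \<mu> \<Longrightarrow> x \<in> {1..n} \<Longrightarrow> strict n c (madd \<mu> \<nu>) x k"
  unfolding feas_def strict_def meas_madd
  by (smt (verit, best) distrib_left)

lemma min_madd:
  assumes "1 \<le> n" "doubling_minimizer n \<mu>" "doubling_minimizer n \<nu>"
  shows "doubling_minimizer n (madd \<mu> \<nu>)"
proof -
  have "is_measure n \<mu>" "is_measure n \<nu>" using assms unfolding doubling_minimizer_def by blast+
  then show ?thesis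
    using feas_min[OF assms(1)] is_measure_madd feas_madd min_feas[OF assms(2)] min_feas[OF assms(3)] by blast
qed

lemma combine:
  assumes n: "1 \<le> n" and fin: "finite F" and ne: "F \<noteq> {}" and sub: "\<forall>c\<in>F. fst c \<in> {1..n}"
    and ex: "\<forall>c\<in>F. \<exists>\<mu>. doubling_minimizer n \<mu> \<and> strict n (doubling_const_graph n) \<mu> (fst c) (snd c)"
  shows "\<exists>\<sigma>. doubling_minimizer n \<sigma> \<and> (\<forall>c\<in>F. strict n (doubling_const_graph n) \<sigma> (fst c) (snd c))"
  using fin ne sub ex
proof (induction F rule: finite_ne_induct)
  case (singleton c)
  then show ?case by auto
next
  case (insert c F)
  then obtain \<sigma> where s: "doubling_minimizer n \<sigma>" "\<forall>c\<in>F. strict n (doubling_const_graph n) \<sigma> (fst c) (snd c)"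
    by auto
  obtain \<mu> where m: "doubling_minimizer n \<mu>" "strict n (doubling_const_graph n) \<mu> (fst c) (snd c)"
    using insert.prems by auto
  have "doubling_minimizer n (madd \<sigma> \<mu>)" by (rule min_madd[OF n s(1) m(1)])
  moreover have "\<forall>c'\<in>insert c F. strict n (doubling_const_graph n) (madd \<sigma> \<mu>) (fst c') (snd c')"
  proof
    fix c' assume c': "c' \<in> insert c F"
    then have x: "fst c' \<in> {1..n}" using insert.prems by auto
    show "strict n (doubling_const_graph n) (madd \<sigma> \<mu>) (fst c') (snd c')"
    proof (cases "c' = c")
      case True
      then show ?thesis using strict_madd2[OF _ min_feas[OF s(1)] x] m(2) by simp
    next
      case False
      then have "c' \<in> F" using c' by simp
      then show ?thesis using strict_madd[OF _ min_feas[OF m(1)] x] s(2) by simp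
    qed
  qed
  ultimately show ?case by blast
qed

lemma affine_neg:
  fixes a b a' b' t T :: real
  assumes "a < b" "a + T * a' < b + T * b'" "0 \<le> t" "t \<le> T"
  shows "a + t * a' < b + t * b'"
proof (cases "a' \<le> b'")
  case True
  then have "t * a' \<le> t * b'" using assms(3) by (simp add: mult_left_mono)
  then show ?thesis using assms(1) by linarith
next
  case False
  then have "t * (a' - b') \<le> T * (a' - b')" using assms(4) by (simp add: mult_right_mono)
  then show ?thesis using assms(2) by (simp add: algebra_simps)
qed

lemma small_t:
  fixes a b a' b' :: "'c \<Rightarrow> real"
  assumes "finite F" "\<forall>c\<in>F. a c < b c"
  shows "\<exists>t>0. \<forall>c\<in>F. a c + t * a' c < b c + t * b' c"
  using assms
proof (induction F rule: finite_induct)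
  case empty
  show ?case by (rule exI[where x=1]) simp
next
  case (insert c F)
  then obtain t1 where t1: "t1 > 0" "\<forall>c\<in>F. a c + t1 * a' c < b c + t1 * b' c" by auto
  have ac: "a c < b c" using insert.prems by auto
  obtain t2 where t2: "t2 > 0" "a c + t2 * a' c < b c + t2 * b' c"
  proof (cases "a' c \<le> b' c")
    case True
    then show ?thesis using that[of 1] ac by simp
  next
    case False
    define t2 where "t2 = (b c - a c) / (2 * (a' c - b' c))"
    have p: "a' c - b' c > 0" using False by simp
    have "t2 > 0" unfolding t2_def using ac p by simp
    moreover have "t2 * (a' c - b' c) = (b c - a c) / 2" unfolding t2_def using p by (simp add: field_simps)
    then have "a c + t2 * a' c < b c + t2 * b' c" using ac by (simp add: algebra_simps)
    ultimately show ?thesis using that by blast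
  qed
  define t where "t = min t1 t2"
  have "t > 0" unfolding t_def using t1 t2 by simp
  moreover have "\<forall>c'\<in>insert c F. a c' + t * a' c' < b c' + t * b' c'"
  proof
    fix c' assume "c' \<in> insert c F"
    then consider "c' = c" | "c' \<in> F" by blast
    then show "a c' + t * a' c' < b c' + t * b' c'"
    proof cases
      case 1
      then show ?thesis using affine_neg[OF ac t2(2), of t] t_def t1 t2 by simp
    next
      case 2
      then show ?thesis using affine_neg[of "a c'" "b c'" t1 "a' c'" "b' c'" t] t1 t2 t_def insert.prems
        by auto
    qed
  qed
  ultimately show ?case by blast
qed

definition pert :: "(nat \<Rightarrow> real) \<Rightarrow> real \<Rightarrow> (nat \<Rightarrow> real) \<Rightarrow> nat \<Rightarrow> real" where
  "pert \<sigma> t w v = \<sigma> v + t * w v"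

lemma meas_pert: "meas (pert \<sigma> t w) A = meas \<sigma> A + t * meas w A"
  unfolding pert_def by (simp add: meas_add meas_scale)

lemma is_measure_pert: "is_measure n \<sigma> \<Longrightarrow> is_measure n w \<Longrightarrow> t > 0 \<Longrightarrow> is_measure n (pert \<sigma> t w)"
  unfolding is_measure_def pert_def by (simp add: add_pos_pos)

lemma perturb:
  assumes "finite F" "\<forall>c\<in>F. strict n C \<sigma> (fst c) (snd c)"
  shows "\<exists>t>0. \<forall>c\<in>F. strict n C (pert \<sigma> t w) (fst c) (snd c)"
proof -
  have "\<exists>t>0. \<forall>c\<in>F. meas \<sigma> (ball_L n (fst c) (2 * snd c+1)) + t * meas w (ball_L n (fst c) (2 * snd c+1))
      < C * meas \<sigma> (ball_L n (fst c) (snd c)) + t * (C * meas w (ball_L n (fst c) (snd c)))"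
    by (rule small_t[OF assms(1)]) (use assms(2) in \<open>auto simp: strict_def\<close>)
  then show ?thesis unfolding strict_def meas_pert by (simp add: algebra_simps)
qed

lemma mediant:
  assumes "feas n C \<sigma>" "x \<in> {1..n}" "meas w (ball_L n x (2*k+1)) < C * meas w (ball_L n x k)" "t > 0"
  shows "strict n C (pert \<sigma> t w) x k"
proof -
  have "meas \<sigma> (ball_L n x (2*k+1)) \<le> C * meas \<sigma> (ball_L n x k)" using assms(1,2) unfolding feas_def by blast
  moreover have "t * meas w (ball_L n x (2*k+1)) < t * (C * meas w (ball_L n x k))"
    using assms(3,4) by simp
  ultimately show ?thesis unfolding strict_def meas_pert by (simp add: algebra_simps)
qed

lemma pert_sym:
  assumes "\<forall>v\<in>{1..n}. \<sigma> (n+1-v) = \<sigma> v" "\<forall>v\<in>{1..n}. w (n+1-v) = w v"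
  shows "\<forall>v\<in>{1..n}. pert \<sigma> t w (n+1-v) = pert \<sigma> t w v"
  using assms unfolding pert_def by simp

lemma sym_meas:
  assumes "\<forall>v\<in>{1..n}. \<mu> (n+1-v) = \<mu> v" "x \<in> {1..n}"
  shows "meas \<mu> (ball_L n (n+1-x) r) = meas \<mu> (ball_L n x r)"
proof -
  have "meas \<mu> (ball_L n (n+1-x) r) = meas (rflm n \<mu>) (ball_L n x r)" using meas_rfl[OF assms(2)] by simp
  also have "\<dots> = meas \<mu> (ball_L n x r)" unfolding meas_def
  proof (rule sum.cong)
    fix v assume "v \<in> ball_L n x r"
    then have "v \<in> {1..n}" using ball_sub by blast
    then show "rflm n \<mu> v = \<mu> v" unfolding rflm_def using assms(1) by blast
  qed simp
  finally show ?thesis .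
qed

lemma strict_sym:
  assumes "\<forall>v\<in>{1..n}. \<mu> (n+1-v) = \<mu> v" "x \<in> {1..n}"
  shows "strict n C \<mu> (n+1-x) k \<longleftrightarrow> strict n C \<mu> x k"
  unfolding strict_def using sym_meas[OF assms] by simp

lemma symmetrize_sym:
  "\<forall>v\<in>{1..n}. madd \<sigma> (rflm n \<sigma>) (n+1-v) = madd \<sigma> (rflm n \<sigma>) v"
  unfolding madd_def rflm_def by auto

definition th :: "nat \<Rightarrow> real" where "th n = pi / real (n+1)"
definition sn :: "nat \<Rightarrow> nat \<Rightarrow> real" where "sn n j = sin (real j * th n)"
definition TT :: "nat \<Rightarrow> real" where "TT n = 1 + 2 * cos (th n)"

lemma th_pos: "0 < th n" unfolding th_def by simp

lemma sn_0: "sn n 0 = 0" unfolding sn_def by simp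

lemma sn_end: "sn n (n+1) = 0"
proof -
  have "real (n+1) * th n = pi" unfolding th_def by simp
  then show ?thesis unfolding sn_def by simp
qed

lemma sn_pos: assumes "1 \<le> j" "j \<le> n" shows "0 < sn n j"
proof -
  have "0 < real j * th n" using assms th_pos by simp
  moreover have "real j * th n < pi"
  proof -
    have "real j < real (n+1)" using assms by simp
    then have "real j * (pi / real (n+1)) < real (n+1) * (pi / real (n+1))"
      by (intro mult_strict_right_mono) auto
    then show ?thesis unfolding th_def by simp
  qed
  ultimately show ?thesis unfolding sn_def by (rule sin_gt_zero)
qed

lemma sn_nonneg: assumes "j \<le> n+1" shows "0 \<le> sn n j"
proof (cases "j = 0 \<or> j = n+1")
  case True then show ?thesis using sn_0 sn_end by auto
next
  case False then show ?thesis using sn_pos[of j n] assms by fastforce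
qed

lemma sn_sym: assumes "j \<le> n+1" shows "sn n (n+1-j) = sn n j"
proof -
  have "real (n+1-j) * th n = pi - real j * th n"
    using assms unfolding th_def by (simp add: of_nat_diff field_simps)
  then show ?thesis unfolding sn_def by simp
qed

lemma sin_eigen: "sin (a - t) + sin (a + t) = 2 * cos t * sin (a::real)"
  by (simp add: sin_add sin_diff)

lemma sn_eigen: assumes "1 \<le> j" shows "sn n (j-1) + sn n (j+1) = 2 * cos (th n) * sn n j"
proof -
  have "real (j-1) * th n = real j * th n - th n" using assms by (simp add: of_nat_diff algebra_simps)
  moreover have "real (j+1) * th n = real j * th n + th n" by (simp add: algebra_simps)
  ultimately show ?thesis unfolding sn_def using sin_eigen by simp
qed

lemma sn_measure: "is_measure n (sn n)"
  unfolding is_measure_def using sn_pos by auto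

lemma sn_sym_all: "\<forall>v\<in>{1..n}. sn n (n+1-v) = sn n v"
  using sn_sym by auto

lemma TT_bound: assumes "3 \<le> n" shows "7/3 < TT n" "2 \<le> TT n"
proof -
  have "th n \<le> pi / 4" unfolding th_def using assms
    by (intro divide_left_mono) auto
  moreover have "0 \<le> th n" using th_pos less_imp_le by blast
  ultimately have "cos (pi/4) \<le> cos (th n)" by (intro cos_monotone_0_pi_le) auto
  then have c: "sqrt 2 / 2 \<le> cos (th n)" by (simp add: cos_45)
  have "4/3 < sqrt 2" by (rule real_less_rsqrt) (simp add: power2_eq_square)
  then show "7/3 < TT n" "2 \<le> TT n" unfolding TT_def using c by auto
qed

definition ext0 :: "nat \<Rightarrow> (nat \<Rightarrow> real) \<Rightarrow> nat \<Rightarrow> real" where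
  "ext0 n \<mu> v = (if v \<in> {1..n} then \<mu> v else 0)"

lemma sum3: "1 \<le> (j::nat) \<Longrightarrow> (\<Sum>v\<in>{j-1, j, j+1}. g v) = g (j-1) + g j + (g (j+1) :: real)"
proof -
  assume j: "1 \<le> j"
  have "j-1 \<notin> {j, j+1}" "j \<notin> {j+1}" using j by auto
  then show ?thesis by simp
qed

lemma ball1_eq:
  assumes "j \<in> {1..n}"
  shows "meas \<mu> (ball_L n j 1) = ext0 n \<mu> (j-1) + ext0 n \<mu> j + ext0 n \<mu> (j+1)"
proof -
  have e: "ball_L n j 1 = {1..n} \<inter> {j-1, j, j+1}"
    unfolding ball_L_eq using assms by auto
  have "meas \<mu> (ball_L n j 1) = sum \<mu> ({j-1, j, j+1} \<inter> {1..n})" unfolding meas_def e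
    by (simp add: Int_commute)
  also have "\<dots> = (\<Sum>v\<in>{j-1, j, j+1}. if v \<in> {1..n} then \<mu> v else 0)"
    by (rule sum.inter_restrict) simp
  also have "\<dots> = ext0 n \<mu> (j-1) + ext0 n \<mu> j + ext0 n \<mu> (j+1)"
    using sum3[of j "\<lambda>v. if v \<in> {1..n} then \<mu> v else 0"] assms unfolding ext0_def by simp
  finally show ?thesis .
qed

lemma ball0_eq:
  assumes "j \<in> {1..n}"
  shows "meas \<mu> (ball_L n j 0) = \<mu> j"
proof -
  have "ball_L n j 0 = {j}" unfolding ball_L_eq using assms by auto
  then show ?thesis unfolding meas_def by simp
qed

lemma telescope: "(\<Sum>j\<in>{1..m::nat}. D j - D (j-1)) = D m - (D 0 :: real)"
  by (induction m) (auto simp: sum.cl_ivl_Suc)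

lemma perron_identity:
  "(\<Sum>j\<in>{1..n}. sn n j * meas \<mu> (ball_L n j 1)) = TT n * (\<Sum>j\<in>{1..n}. sn n j * \<mu> j)"
proof -
  let ?e = "ext0 n \<mu>" and ?s = "sn n"
  define D where "D j = ?s j * ?e (j+1) - ?s (j+1) * ?e j" for j
  have D0: "D 0 = 0" unfolding D_def ext0_def sn_0 by simp
  have Dn: "D n = 0" unfolding D_def ext0_def using sn_end[of n] by simp
  have "(\<Sum>j\<in>{1..n}. ?s j * meas \<mu> (ball_L n j 1))
      = (\<Sum>j\<in>{1..n}. ?e j * (?s (j-1) + ?s (j+1)) + ?s j * ?e j + (D j - D (j-1)))"
  proof (rule sum.cong)
    fix j assume j: "j \<in> {1..n}"
    have "D j - D (j-1) = ?s j * ?e (j+1) - ?s (j+1) * ?e j - ?s (j-1) * ?e j + ?s j * ?e (j-1)"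
      unfolding D_def using j by simp
    then show "?s j * meas \<mu> (ball_L n j 1) = ?e j * (?s (j-1) + ?s (j+1)) + ?s j * ?e j + (D j - D (j-1))"
      unfolding ball1_eq[OF j] by (simp add: algebra_simps)
  qed simp
  also have "\<dots> = (\<Sum>j\<in>{1..n}. ?e j * (?s (j-1) + ?s (j+1)) + ?s j * ?e j) + (\<Sum>j\<in>{1..n}. D j - D (j-1))"
    by (simp only: sum.distrib)
  also have "\<dots> = (\<Sum>j\<in>{1..n}. ?e j * (?s (j-1) + ?s (j+1)) + ?s j * ?e j) + (D n - D 0)"
    by (simp only: telescope)
  also have "\<dots> = (\<Sum>j\<in>{1..n}. ?e j * (?s (j-1) + ?s (j+1)) + ?s j * ?e j)"
    unfolding D0 Dn by simp
  also have "\<dots> = (\<Sum>j\<in>{1..n}. TT n * (?s j * \<mu> j))"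
  proof (rule sum.cong)
    fix j assume j: "j \<in> {1..n}"
    then have "?e j = \<mu> j" unfolding ext0_def by simp
    moreover have "?s (j-1) + ?s (j+1) = 2 * cos (th n) * ?s j" using sn_eigen[of j n] j by simp
    ultimately show "?e j * (?s (j-1) + ?s (j+1)) + ?s j * ?e j = TT n * (?s j * \<mu> j)"
      unfolding TT_def by (simp add: algebra_simps)
  qed simp
  finally show ?thesis by (simp add: sum_distrib_left)
qed

lemma weighted_pos: "is_measure n \<mu> \<Longrightarrow> 1 \<le> n \<Longrightarrow> 0 < (\<Sum>j\<in>{1..n}. sn n j * \<mu> j)"
  unfolding is_measure_def
  by (intro sum_pos) (auto intro!: mult_pos_pos sn_pos)

lemma k0_le: "feas n c \<mu> \<Longrightarrow> j \<in> {1..n} \<Longrightarrow> meas \<mu> (ball_L n j 1) \<le> c * \<mu> j"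
  unfolding feas_def using ball0_eq[of j n \<mu>] by (metis mult_0_right add_0)

lemma dc_feas: "feas n (doubling_const n \<mu>) \<mu>" if "is_measure n \<mu>"
  unfolding feas_def
proof (intro ballI allI)
  fix x k assume x: "x \<in> {1..n}"
  have "ratio n \<mu> x k \<le> doubling_const n \<mu>" by (rule dc_upper[OF x])
  then show "meas \<mu> (ball_L n x (2*k+1)) \<le> doubling_const n \<mu> * meas \<mu> (ball_L n x k)"
    unfolding ratio_def by (simp only: pos_divide_le_eq[OF meas_pos[OF that x]])
qed

lemma perron_lower:
  assumes "1 \<le> n" "is_measure n \<mu>" "feas n c \<mu>"
  shows "TT n \<le> c"
proof -
  let ?W = "\<Sum>j\<in>{1..n}. sn n j * \<mu> j"
  have "TT n * ?W = (\<Sum>j\<in>{1..n}. sn n j * meas \<mu> (ball_L n j 1))" by (rule perron_identity[symmetric])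
  also have "\<dots> \<le> (\<Sum>j\<in>{1..n}. sn n j * (c * \<mu> j))"
    by (intro sum_mono mult_left_mono k0_le[OF assms(3)]) (auto intro!: sn_nonneg)
  also have "\<dots> = c * ?W" by (simp add: sum_distrib_left algebra_simps)
  finally show ?thesis using weighted_pos[OF assms(2,1)] by simp
qed

lemma dcg_lower: assumes "1 \<le> n" shows "TT n \<le> doubling_const_graph n"
  by (rule dcg_ge) (rule perron_lower[OF assms _ dc_feas])

lemma perron_eq:
  assumes "1 \<le> n" "is_measure n \<mu>" "feas n (TT n) \<mu>" "j \<in> {1..n}"
  shows "meas \<mu> (ball_L n j 1) = TT n * \<mu> j"
proof -
  let ?f = "\<lambda>j. sn n j * (TT n * \<mu> j - meas \<mu> (ball_L n j 1))"
  have nn: "\<forall>i\<in>{1..n}. 0 \<le> ?f i"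
    using k0_le[OF assms(3)] sn_nonneg by (auto intro!: mult_nonneg_nonneg)
  have "(\<Sum>i\<in>{1..n}. ?f i) = TT n * (\<Sum>i\<in>{1..n}. sn n i * \<mu> i) - (\<Sum>i\<in>{1..n}. sn n i * meas \<mu> (ball_L n i 1))"
    by (simp add: algebra_simps sum_subtractf sum_distrib_left)
  also have "\<dots> = 0" using perron_identity[of n \<mu>] by simp
  moreover have "(\<Sum>i\<in>{1..n}. ?f i) = 0 \<longleftrightarrow> (\<forall>i\<in>{1..n}. ?f i = 0)"
    by (rule sum_nonneg_eq_0_iff) (use nn in auto)
  ultimately have "\<forall>i\<in>{1..n}. ?f i = 0" by simp
  then have "?f j = 0" using assms(4) by blast
  moreover have "sn n j > 0" using sn_pos assms(4) by auto
  ultimately show ?thesis by simp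
qed

lemma card_bound:
  assumes "x \<in> {1..n}" "2 \<le> n" "\<not> (k = 0 \<and> 2 \<le> x \<and> x \<le> n - 1)"
  shows "3 * card (ball_L n x (2*k+1)) \<le> 7 * card (ball_L n x k)"
  using assms unfolding ball_L_eq card_atLeastAtMost max_def min_def
  by (auto split: if_splits)

lemma meas_one: "meas (\<lambda>_. 1) A = real (card A)"
  unfolding meas_def by simp

lemma card_ball_pos: "x \<in> {1..n} \<Longrightarrow> 0 < card (ball_L n x r)"
  using center_in_ball[of x n r] ball_fin[of n x r] card_gt_0_iff by blast

lemma J_part:
  assumes n3: "3 \<le> n"
  shows "\<exists>j. 2 \<le> j \<and> 2*j \<le> n+1 \<and> (\<forall>\<mu>. doubling_minimizer n \<mu> \<longrightarrow>
            meas \<mu> (ball_L n j 1) = doubling_const_graph n * meas \<mu> (ball_L n j 0))"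
proof (rule ccontr)
  let ?C = "doubling_const_graph n"
  have n1: "1 \<le> n" using n3 by simp
  assume "\<not> ?thesis"
  then have H: "\<forall>j. 2 \<le> j \<and> 2*j \<le> n+1 \<longrightarrow> (\<exists>\<mu>. doubling_minimizer n \<mu> \<and>
            meas \<mu> (ball_L n j 1) \<noteq> ?C * meas \<mu> (ball_L n j 0))" by blast
  define JS where "JS = {j. 2 \<le> j \<and> 2*j \<le> n+1}"
  define F where "F = (\<lambda>j. (j, 0::nat)) ` JS"
  have JSsub: "JS \<subseteq> {1..n}" unfolding JS_def by auto
  have finF: "finite F" unfolding F_def using JSsub finite_subset by (blast intro: finite_imageI)
  have neF: "F \<noteq> {}" unfolding F_def JS_def using n3 by auto
  have subF: "\<forall>c\<in>F. fst c \<in> {1..n}" unfolding F_def using JSsub by auto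
  have exF: "\<forall>c\<in>F. \<exists>\<mu>. doubling_minimizer n \<mu> \<and> strict n ?C \<mu> (fst c) (snd c)"
  proof
    fix c assume "c \<in> F"
    then obtain j where j: "j \<in> JS" "c = (j,0)" unfolding F_def by blast
    then obtain \<mu> where m: "doubling_minimizer n \<mu>" "meas \<mu> (ball_L n j 1) \<noteq> ?C * meas \<mu> (ball_L n j 0)"
      using H unfolding JS_def by blast
    have "meas \<mu> (ball_L n j (2*0+1)) \<le> ?C * meas \<mu> (ball_L n j 0)"
      using min_feas[OF m(1)] j JSsub unfolding feas_def by blast
    then have "strict n ?C \<mu> j 0" using m(2) unfolding strict_def by simp
    then show "\<exists>\<mu>. doubling_minimizer n \<mu> \<and> strict n ?C \<mu> (fst c) (snd c)" using m(1) j by auto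
  qed
  obtain \<sigma>0 where s0: "doubling_minimizer n \<sigma>0" "\<forall>c\<in>F. strict n ?C \<sigma>0 (fst c) (snd c)"
    using combine[OF n1 finF neF subF exF] by blast
  define \<sigma> where "\<sigma> = madd \<sigma>0 (rflm n \<sigma>0)"
  have smin: "doubling_minimizer n \<sigma>" unfolding \<sigma>_def by (rule min_madd[OF n1 s0(1) min_rfl[OF n1 s0(1)]])
  have ssym: "\<forall>v\<in>{1..n}. \<sigma> (n+1-v) = \<sigma> v" unfolding \<sigma>_def by (rule symmetrize_sym)
  have sJ: "strict n ?C \<sigma> j 0" if "j \<in> JS" for j
  proof -
    have "(j,0) \<in> F" unfolding F_def using that by blast
    then have "strict n ?C \<sigma>0 j 0" using s0(2) by auto
    then show ?thesis unfolding \<sigma>_def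
      using strict_madd[OF _ feas_rfl[OF min_feas[OF s0(1)]]] that JSsub by blast
  qed
  have sI: "strict n ?C \<sigma> i 0" if "2 \<le> i" "i \<le> n - 1" for i
  proof (cases "2*i \<le> n+1")
    case True then show ?thesis using sJ that unfolding JS_def by blast
  next
    case False
    have i': "n+1-i \<in> JS" unfolding JS_def using False that by auto
    have "n+1-i \<in> {1..n}" using i' JSsub by blast
    then have "strict n ?C \<sigma> (n+1-(n+1-i)) 0 \<longleftrightarrow> strict n ?C \<sigma> (n+1-i) 0" by (rule strict_sym[OF ssym])
    moreover have "n+1-(n+1-i) = i" using that by simp
    ultimately show ?thesis using sJ[OF i'] by simp
  qed
  define F2 where "F2 = (\<lambda>i. (i, 0::nat)) ` {2..n-1}"
  have "finite F2" unfolding F2_def by simp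
  moreover have "\<forall>c\<in>F2. strict n ?C \<sigma> (fst c) (snd c)" unfolding F2_def using sI by auto
  ultimately obtain t where t: "t > 0" "\<forall>c\<in>F2. strict n ?C (pert \<sigma> t (\<lambda>_. 1)) (fst c) (snd c)"
    using perturb by blast
  let ?\<nu> = "pert \<sigma> t (\<lambda>_. 1)"
  have smeas: "is_measure n \<sigma>" using smin unfolding doubling_minimizer_def by blast
  have numeas: "is_measure n ?\<nu>"
    by (rule is_measure_pert[OF smeas _ t(1)]) (simp add: is_measure_def)
  have Cbig: "7/3 < ?C" using TT_bound(1)[OF n3] dcg_lower[OF n1] by linarith
  have "\<forall>x\<in>{1..n}. \<forall>k\<le>n. strict n ?C ?\<nu> x k"
  proof (intro ballI allI impI)
    fix x k assume x: "x \<in> {1..n}" and "k \<le> n"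
    show "strict n ?C ?\<nu> x k"
    proof (cases "k = 0 \<and> 2 \<le> x \<and> x \<le> n - 1")
      case True
      then have "(x,k) \<in> F2" unfolding F2_def by auto
      then show ?thesis using t(2) by auto
    next
      case False
      have cb: "3 * card (ball_L n x (2*k+1)) \<le> 7 * card (ball_L n x k)"
        by (rule card_bound[OF x _ False]) (use n3 in simp)
      have cp: "0 < card (ball_L n x k)" by (rule card_ball_pos[OF x])
      have "real (card (ball_L n x (2*k+1))) \<le> 7/3 * real (card (ball_L n x k))"
        using cb by linarith
      also have "\<dots> < ?C * real (card (ball_L n x k))"
        using Cbig cp by (intro mult_strict_right_mono) auto
      finally have "meas (\<lambda>_. 1) (ball_L n x (2*k+1)) < ?C * meas (\<lambda>_. 1) (ball_L n x k)"
        unfolding meas_one .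
      then show ?thesis by (rule mediant[OF min_feas[OF smin] x _ t(1)])
    qed
  qed
  then show False by (rule all_strict_False[OF n1 numeas])
qed

lemma trigII:
  fixes a h :: real
  assumes h0: "0 < h" and h8: "h \<le> pi/8" and a6: "pi/6 \<le> a" and a2: "2*a + h \<le> pi/2"
  shows "cos h - cos (4*a+h) \<le> (1 + 2*cos(2*h)) * (cos h - cos (2*a+h))"
proof -
  have i1: "cos h - cos (4*a+h) = 2 * sin (2*a+h) * sin (2*a)"
  proof -
    have F: "cos h - cos (4*a+h) = 2 * sin ((h + (4*a+h))/2) * sin ((4*a+h-h)/2)" by (rule cos_diff_cos)
    have e1: "(h + (4*a+h))/2 = 2*a+h" and e2: "(4*a+h-h)/2 = 2*a" by simp_all
    show ?thesis using F by (simp only: e1 e2)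
  qed
  have i2: "cos h - cos (2*a+h) = 2 * sin (a+h) * sin a"
  proof -
    have F: "cos h - cos (2*a+h) = 2 * sin ((h + (2*a+h))/2) * sin ((2*a+h-h)/2)" by (rule cos_diff_cos)
    have e1: "(h + (2*a+h))/2 = a+h" and e2: "(2*a+h-h)/2 = a" by simp_all
    show ?thesis using F by (simp only: e1 e2)
  qed
  have i3: "sin (2*a) = 2 * sin a * cos a" by (rule sin_double)
  have i4: "2 * sin (2*a+h) * cos a = sin (3*a+h) + sin (a+h)"
  proof -
    have F: "sin (2*a+h) * cos a = (sin (2*a+h + a) + sin (2*a+h - a)) / 2" by (rule sin_times_cos)
    have e1: "2*a+h + a = 3*a+h" and e2: "2*a+h - a = a+h" by simp_all
    show ?thesis using F by (simp only: e1 e2) simp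
  qed
  have i5: "\<And>b. 2 * sin (b+h) * cos (2*h) = sin (b+3*h) + sin (b-h)"
  proof -
    fix b :: real
    have F: "sin (b+h) * cos (2*h) = (sin (b+h + 2*h) + sin (b+h - 2*h)) / 2" by (rule sin_times_cos)
    have e1: "b+h + 2*h = b+3*h" and e2: "b+h - 2*h = b-h" by simp_all
    show "2 * sin (b+h) * cos (2*h) = sin (b+3*h) + sin (b-h)" using F by (simp only: e1 e2) simp
  qed
  have pi0: "0 < pi" by (rule pi_gt_zero)
  have k1: "sin (3*a+h) \<le> cos h"
  proof -
    have "sin (3*a+h) = cos (3*a+h - pi/2)"
      using sin_cos_eq[of "3*a+h"] cos_minus[of "3*a+h - pi/2"] by simp
    moreover have "cos (3*a+h - pi/2) \<le> cos h"
      by (rule cos_monotone_0_pi_le) (use h0 a6 a2 h8 in auto)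
    ultimately show ?thesis by simp
  qed
  have c2h: "0 \<le> cos (2*h)" by (rule cos_ge_zero) (use h0 h8 in auto)
  have s2c: "sin (2*h) \<le> cos (2*h)"
  proof -
    have "sin (2*h) \<le> sin (pi/4)" by (rule sin_monotone_2pi_le) (use h0 h8 in auto)
    moreover have "cos (pi/4) \<le> cos (2*h)" by (rule cos_monotone_0_pi_le) (use h0 h8 in auto)
    ultimately show ?thesis by (simp add: sin_45 cos_45)
  qed
  have sh: "0 \<le> sin h" by (rule sin_ge_zero) (use h0 h8 in auto)
  have r3: "1 \<le> sqrt 3" by simp
  have k2: "cos h \<le> 2 * sin (pi/6 + h) * cos (2*h)"
  proof -
    have e: "sin (pi/6 + h) = 1/2 * cos h + sqrt 3 / 2 * sin h"
      by (simp add: sin_add sin_30 cos_30)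
    have cd: "cos (2*h) = 1 - 2 * sin h ^ 2" by (rule cos_double_sin)
    have sd: "sin (2*h) = 2 * sin h * cos h" by (rule sin_double)
    have "sin h * sin (2*h) \<le> sin h * (sqrt 3 * cos (2*h))"
    proof (rule mult_left_mono[OF _ sh])
      have "1 * cos (2*h) \<le> sqrt 3 * cos (2*h)" by (rule mult_right_mono[OF r3 c2h])
      then show "sin (2*h) \<le> sqrt 3 * cos (2*h)" using s2c by linarith
    qed
    then have "sin h * (2 * sin h * cos h) \<le> sin h * sqrt 3 * (1 - 2 * sin h ^ 2)"
      unfolding sd cd by (simp add: algebra_simps)
    then show ?thesis unfolding e cd by (simp add: algebra_simps power2_eq_square)
  qed
  have k3: "sin (pi/6 + h) \<le> sin (a + h)"
    by (rule sin_monotone_2pi_le) (use h0 a6 a2 in auto)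
  have k4: "sin (3*a+h) \<le> sin (a+3*h) + sin (a-h)"
  proof -
    have "2 * sin (pi/6 + h) * cos (2*h) \<le> 2 * sin (a+h) * cos (2*h)"
      using k3 c2h by (simp add: mult_right_mono)
    then show ?thesis using k1 k2 i5[of a] by linarith
  qed
  have sa: "0 \<le> sin a" by (rule sin_ge_zero) (use a6 a2 h0 in auto)
  have "cos h - cos (4*a+h) = 2 * sin (2*a+h) * (2 * sin a * cos a)" using i1 i3 by simp
  also have "\<dots> = 2 * sin a * (2 * sin (2*a+h) * cos a)" by (simp only: ac_simps)
  also have "\<dots> = 2 * sin a * (sin (3*a+h) + sin (a+h))" by (simp only: i4)
  also have "\<dots> \<le> 2 * sin a * (sin (a+3*h) + sin (a-h) + sin (a+h))"
    using k4 sa by (intro mult_left_mono) auto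
  also have "\<dots> = (1 + 2*cos(2*h)) * (cos h - cos (2*a+h))"
    unfolding i2 using i5[of a] by (simp add: algebra_simps)
  finally show ?thesis .
qed

lemma sum_sin_closed:
  fixes h :: real
  shows "2 * sin h * (\<Sum>j\<in>{1..b}. sin (real j * (2*h))) = cos h - cos ((2 * real b + 1) * h)"
proof (induction b)
  case 0
  then show ?case by simp
next
  case (Suc b)
  have st: "sin (real (Suc b) * (2*h)) * sin h
      = (cos (real (Suc b) * (2*h) - h) - cos (real (Suc b) * (2*h) + h)) / 2" by (rule sin_times_sin)
  have e1: "real (Suc b) * (2*h) - h = (2 * real b + 1) * h" by (simp add: algebra_simps)
  have e2: "real (Suc b) * (2*h) + h = (2 * real (Suc b) + 1) * h" by (simp add: algebra_simps)
  have "2 * sin h * (\<Sum>j\<in>{1..Suc b}. sin (real j * (2*h)))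
      = 2 * sin h * (\<Sum>j\<in>{1..b}. sin (real j * (2*h))) + 2 * (sin (real (Suc b) * (2*h)) * sin h)"
    by (simp add: sum.cl_ivl_Suc algebra_simps)
  also have "\<dots> = cos h - cos ((2 * real (Suc b) + 1) * h)"
    unfolding Suc.IH st e1 e2 by (simp add: field_simps)
  finally show ?case .
qed

lemma th_half: "th n = 2 * (pi / (2 * real (n+1)))"
  unfolding th_def by (simp add: field_simps)

lemma sn_sum_closed:
  "2 * sin (pi / (2 * real (n+1))) * (\<Sum>j\<in>{1..b}. sn n j)
     = cos (pi / (2 * real (n+1))) - cos ((2 * real b + 1) * (pi / (2 * real (n+1))))"
  unfolding sn_def th_half by (rule sum_sin_closed)

lemma typeII:
  assumes n3: "3 \<le> n" and m1: "1 \<le> m" and m3: "n+1 \<le> 3*m" and m2: "2*m \<le> n"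
  shows "(\<Sum>j\<in>{1..2*m}. sn n j) \<le> TT n * (\<Sum>j\<in>{1..m}. sn n j)"
proof -
  define h where "h = pi / (2 * real (n+1))"
  define a where "a = real m * h"
  have h0: "0 < h" unfolding h_def by simp
  have h8: "h \<le> pi/8" unfolding h_def using n3 by (intro divide_left_mono) auto
  have gen: "\<And>r::real. r > 0 \<Longrightarrow> r * (pi / (2*r)) = pi/2" by (simp add: field_simps)
  have nh: "real (n+1) * h = pi/2" unfolding h_def by (rule gen) simp
  have a6: "pi/6 \<le> a"
  proof -
    have "real (n+1) \<le> 3 * real m" using m3 by linarith
    then have "real (n+1) * h \<le> (3 * real m) * h" using h0 by (intro mult_right_mono) auto
    then show ?thesis unfolding a_def nh by simp
  qed
  have a2: "2*a + h \<le> pi/2"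
  proof -
    have "2 * real m + 1 \<le> real (n+1)" using m2 by linarith
    then have "(2 * real m + 1) * h \<le> real (n+1) * h" using h0 by (intro mult_right_mono) auto
    then show ?thesis unfolding a_def nh by (simp add: algebra_simps)
  qed
  have t: "cos h - cos (4*a+h) \<le> (1 + 2*cos(2*h)) * (cos h - cos (2*a+h))"
    by (rule trigII[OF h0 h8 a6 a2])
  have ea: "(2 * real (2*m) + 1) * h = 4*a+h" unfolding a_def by (simp add: algebra_simps)
  have eb: "(2 * real m + 1) * h = 2*a+h" unfolding a_def by (simp add: algebra_simps)
  have c1: "2 * sin h * (\<Sum>j\<in>{1..2*m}. sn n j) = cos h - cos (4*a+h)"
    using sn_sum_closed[of n "2*m", folded h_def] by (simp only: ea)
  have c2: "2 * sin h * (\<Sum>j\<in>{1..m}. sn n j) = cos h - cos (2*a+h)"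
    using sn_sum_closed[of n m, folded h_def] by (simp only: eb)
  have TTe: "TT n = 1 + 2*cos(2*h)" unfolding TT_def h_def th_half by simp
  have sh: "0 < sin h" by (rule sin_gt_zero) (use h0 h8 in auto)
  have "2 * sin h * (\<Sum>j\<in>{1..2*m}. sn n j) = cos h - cos (4*a+h)" by (rule c1)
  also have "\<dots> \<le> (1 + 2*cos(2*h)) * (cos h - cos (2*a+h))" by (rule t)
  also have "\<dots> = 2 * sin h * (TT n * (\<Sum>j\<in>{1..m}. sn n j))"
    unfolding c2[symmetric] TTe by (simp add: algebra_simps)
  finally have "2 * sin h * (\<Sum>j\<in>{1..2*m}. sn n j) \<le> 2 * sin h * (TT n * (\<Sum>j\<in>{1..m}. sn n j))" .
  then show ?thesis using sh by simp
qed

lemma sn_sym': "j \<le> Suc n \<Longrightarrow> sn n (Suc n - j) = sn n j"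
  using sn_sym[of j n] by simp

lemma sum_sn_tail:
  assumes "m \<le> n"
  shows "(\<Sum>j\<in>{m+1..n}. sn n j) = (\<Sum>j\<in>{1..n-m}. sn n j)"
proof -
  have inj: "inj_on (\<lambda>j. n+1-j) {1..n-m}" by (auto simp: inj_on_def)
  have img: "(\<lambda>j. n+1-j) ` {1..n-m} = {m+1..n}"
  proof (intro set_eqI iffI)
    fix y assume "y \<in> (\<lambda>j. n+1-j) ` {1..n-m}" then show "y \<in> {m+1..n}" using assms by auto
  next
    fix y assume y: "y \<in> {m+1..n}"
    then have "n+1-y \<in> {1..n-m}" "y = n+1-(n+1-y)" by auto
    then show "y \<in> (\<lambda>j. n+1-j) ` {1..n-m}" by blast
  qed
  have "(\<Sum>j\<in>{m+1..n}. sn n j) = sum (sn n) ((\<lambda>j. n+1-j) ` {1..n-m})"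
    by (simp only: img)
  also have "\<dots> = sum (sn n \<circ> (\<lambda>j. n+1-j)) {1..n-m}" by (rule sum.reindex[OF inj])
  also have "\<dots> = (\<Sum>j\<in>{1..n-m}. sn n (n+1-j))" by (simp add: comp_def)
  also have "\<dots> = (\<Sum>j\<in>{1..n-m}. sn n j)"
    by (rule sum.cong) (use sn_sym' in auto)
  finally show ?thesis .
qed

lemma typeII':
  assumes "m \<le> n" "n+1 \<le> 2*m"
  shows "(\<Sum>j\<in>{1..n}. sn n j) \<le> 2 * (\<Sum>j\<in>{1..m}. sn n j)"
proof -
  have "{1..n} = {1..m} \<union> {m+1..n}" using assms by auto
  then have "(\<Sum>j\<in>{1..n}. sn n j) = (\<Sum>j\<in>{1..m}. sn n j) + (\<Sum>j\<in>{m+1..n}. sn n j)"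
    by (simp add: sum.union_disjoint ivl_disj_int)
  also have "(\<Sum>j\<in>{m+1..n}. sn n j) = (\<Sum>j\<in>{1..n-m}. sn n j)" by (rule sum_sn_tail[OF assms(1)])
  also have "\<dots> \<le> (\<Sum>j\<in>{1..m}. sn n j)"
    by (rule sum_mono2) (use assms in \<open>auto intro!: sn_nonneg\<close>)
  finally show ?thesis by simp
qed

lemma left_sine:
  assumes n3: "3 \<le> n" and x: "x \<in> {1..n}" and xk: "x \<le> k+1" and m: "x + k < n" and m3: "n+1 \<le> 3*(x+k)"
  shows "meas (sn n) (ball_L n x (2*k+1)) \<le> TT n * meas (sn n) (ball_L n x k)"
proof -
  let ?m = "x + k"
  have bN: "ball_L n x k = {1..?m}" unfolding ball_L_eq using xk m by auto
  have bO: "ball_L n x (2*k+1) \<subseteq> {1..min n (2*?m)}" unfolding ball_L_eq using x by auto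
  have "meas (sn n) (ball_L n x (2*k+1)) \<le> meas (sn n) {1..min n (2*?m)}"
    by (rule meas_mono[OF sn_measure bO]) auto
  also have "\<dots> \<le> TT n * meas (sn n) {1..?m}"
  proof (cases "2*?m \<le> n")
    case True
    then show ?thesis unfolding meas_def using typeII[OF n3 _ m3 True] x by simp
  next
    case False
    then have "meas (sn n) {1..min n (2*?m)} \<le> 2 * meas (sn n) {1..?m}"
      unfolding meas_def using typeII'[of ?m n] m by simp
    moreover have "0 \<le> meas (sn n) {1..?m}" by (rule meas_nonneg[OF sn_measure]) (use m in auto)
    moreover have "2 * meas (sn n) {1..?m} \<le> TT n * meas (sn n) {1..?m}"
      by (rule mult_right_mono[OF TT_bound(2)[OF n3] calculation(2)])
    ultimately show ?thesis by linarith
  qed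
  finally show ?thesis unfolding bN .
qed

definition fi :: "nat \<Rightarrow> int \<Rightarrow> real" where "fi n j = sin (of_int j * th n)"
definition Es :: "nat \<Rightarrow> int \<Rightarrow> nat \<Rightarrow> real" where "Es n a l = (\<Sum>i<l. fi n (a + int i))"

lemma fi_nat: "fi n (int j) = sn n j" unfolding fi_def sn_def by simp

lemma Es_0[simp]: "Es n a 0 = 0" unfolding Es_def by simp

lemma Es_Suc_right: "Es n a (Suc l) = Es n a l + fi n (a + int l)"
  unfolding Es_def by simp

lemma Es_split: "Es n a (l1 + l2) = Es n a l1 + Es n (a + int l1) l2"
proof (induction l2)
  case 0 then show ?case by simp
next
  case (Suc l2)
  have "Es n a (l1 + Suc l2) = Es n a (l1 + l2) + fi n (a + int (l1 + l2))"
    using Es_Suc_right[of n a "l1 + l2"] by simp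
  also have "\<dots> = Es n a l1 + (Es n (a + int l1) l2 + fi n (a + int l1 + int l2))"
    using Suc.IH by (simp add: algebra_simps)
  also have "\<dots> = Es n a l1 + Es n (a + int l1) (Suc l2)" by (simp add: Es_Suc_right)
  finally show ?case .
qed

lemma Es_Suc_left: "Es n a (Suc l) = fi n a + Es n (a+1) l"
  using Es_split[of n a 1 l] unfolding Es_def by simp

lemma Es_nat: "(\<Sum>v\<in>{lo..<lo+l}. sn n v) = Es n (int lo) l"
proof (induction l)
  case 0 then show ?case by simp
next
  case (Suc l)
  have "{lo..<lo + Suc l} = insert (lo + l) {lo..<lo+l}" by auto
  then have "(\<Sum>v\<in>{lo..<lo + Suc l}. sn n v) = sn n (lo + l) + (\<Sum>v\<in>{lo..<lo+l}. sn n v)" by simp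
  then show ?case using Suc.IH Es_Suc_right[of n "int lo" l] fi_nat[of n "lo + l"] by simp
qed

lemma meas_interval:
  assumes "lo \<le> hi + 1"
  shows "meas (sn n) {lo..hi} = Es n (int lo) (hi + 1 - lo)"
proof -
  have "{lo..hi} = {lo..<lo + (hi + 1 - lo)}" using assms by auto
  then show ?thesis unfolding meas_def using Es_nat by simp
qed

lemma fi_eigen: "fi n (a-1) + fi n (a+1) = 2 * cos (th n) * fi n a"
proof -
  have "of_int (a-1) * th n = of_int a * th n - th n" "of_int (a+1) * th n = of_int a * th n + th n"
    by (simp_all add: algebra_simps)
  then show ?thesis unfolding fi_def using sin_eigen by simp
qed

lemma Es_eigen: "Es n (a-1) l + Es n a l + Es n (a+1) l = TT n * Es n a l"
proof -
  have "Es n (a-1) l + Es n a l + Es n (a+1) l = (\<Sum>i<l. fi n (a + int i - 1) + fi n (a + int i) + fi n (a + int i + 1))"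
    unfolding Es_def by (simp add: sum.distrib algebra_simps)
  also have "\<dots> = (\<Sum>i<l. TT n * fi n (a + int i))"
  proof (rule sum.cong)
    fix i
    show "fi n (a + int i - 1) + fi n (a + int i) + fi n (a + int i + 1) = TT n * fi n (a + int i)"
      using fi_eigen[of n "a + int i"] unfolding TT_def by (simp add: algebra_simps)
  qed simp
  also have "\<dots> = TT n * Es n a l" unfolding Es_def by (simp add: sum_distrib_left)
  finally show ?thesis .
qed

lemma Es_rev: "(\<Sum>i<l. fi n (b - int i)) = Es n (b - int l + 1) l"
proof (induction l)
  case 0 then show ?case by simp
next
  case (Suc l)
  have "(\<Sum>i<Suc l. fi n (b - int i)) = (\<Sum>i<l. fi n (b - int i)) + fi n (b - int l)" by simp
  also have "\<dots> = fi n (b - int (Suc l) + 1) + Es n (b - int l + 1) l" using Suc.IH by simp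
  also have "\<dots> = Es n (b - int (Suc l) + 1) (Suc l)"
    using Es_Suc_left[of n "b - int (Suc l) + 1" l] by simp
  finally show ?case .
qed

lemma fi_0: "fi n 0 = 0" unfolding fi_def by simp

lemma fi_odd: "fi n (- j) = - fi n j" unfolding fi_def by simp

lemma th_mult: "real (n+1) * th n = pi" unfolding th_def by simp

lemma fi_end: "fi n (int n + 1 + j) = - fi n j"
proof -
  have "of_int (int n + 1 + j) * th n = of_int j * th n + pi"
    using th_mult[of n] by (simp add: algebra_simps)
  then show ?thesis unfolding fi_def by simp
qed

lemma Es_neg: "Es n (1 - int c) c = - Es n 0 c"
proof -
  have "Es n (1 - int c) c = (\<Sum>i<c. fi n (0 - int i))" using Es_rev[of n 0 c] by simp
  also have "\<dots> = - Es n 0 c" unfolding Es_def using fi_odd by (simp add: sum_negf)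
  finally show ?thesis .
qed

lemma Es_endneg: "Es n (int n + 1) c = - Es n 0 c"
  unfolding Es_def using fi_end by (simp add: sum_negf)

lemma Es_01: "Es n 0 c = Es n 1 (c - 1)"
proof (cases c)
  case 0 then show ?thesis by simp
next
  case (Suc d) then show ?thesis using Es_Suc_left[of n 0 d] fi_0 by simp
qed

lemma th_pos': "0 < th n" by (rule th_pos)

lemma fi_nonneg:
  assumes "0 \<le> j" "j \<le> int n + 1"
  shows "0 \<le> fi n j"
proof -
  have "0 \<le> of_int j * th n" using assms th_pos[of n] by simp
  moreover have "of_int j * th n \<le> real (n+1) * th n"
    using assms th_pos[of n] by (intro mult_right_mono) auto
  ultimately show ?thesis unfolding fi_def using th_mult[of n] by (intro sin_ge_zero) auto
qed

lemma fi_pair: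
  assumes "a \<le> b" "b \<le> c" "c \<le> d" "a + d = b + c" "0 \<le> b + c" "b + c \<le> 2 * (int n + 1)"
    "d - a \<le> 2 * (int n + 1)"
  shows "fi n a + fi n d \<le> fi n b + fi n c"
proof -
  let ?t = "th n"
  have t0: "0 < ?t" by (rule th_pos)
  have tm: "real (n+1) * ?t = pi" by (rule th_mult)
  have ad: "fi n a + fi n d = 2 * sin (of_int (a + d) * ?t / 2) * cos (of_int (d - a) * ?t / 2)"
    unfolding fi_def sin_plus_sin
  proof -
    have "(of_int a * ?t - of_int d * ?t) / 2 = - (of_int (d - a) * ?t / 2)" by (simp add: field_simps)
    then have eq1: "cos ((of_int a * ?t - of_int d * ?t) / 2) = cos (of_int (d - a) * ?t / 2)" by simp
    have eq2: "(of_int a * ?t + of_int d * ?t) / 2 = of_int (a + d) * ?t / 2" by (simp add: field_simps)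
    show "2 * sin ((of_int a * ?t + of_int d * ?t) / 2) * cos ((of_int a * ?t - of_int d * ?t) / 2)
      = 2 * sin (of_int (a + d) * ?t / 2) * cos (of_int (d - a) * ?t / 2)" by (simp only: eq1 eq2)
  qed
  have bc: "fi n b + fi n c = 2 * sin (of_int (b + c) * ?t / 2) * cos (of_int (c - b) * ?t / 2)"
    unfolding fi_def sin_plus_sin
  proof -
    have "(of_int b * ?t - of_int c * ?t) / 2 = - (of_int (c - b) * ?t / 2)" by (simp add: field_simps)
    then have eq1: "cos ((of_int b * ?t - of_int c * ?t) / 2) = cos (of_int (c - b) * ?t / 2)" by simp
    have eq2: "(of_int b * ?t + of_int c * ?t) / 2 = of_int (b + c) * ?t / 2" by (simp add: field_simps)
    show "2 * sin ((of_int b * ?t + of_int c * ?t) / 2) * cos ((of_int b * ?t - of_int c * ?t) / 2)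
      = 2 * sin (of_int (b + c) * ?t / 2) * cos (of_int (c - b) * ?t / 2)" by (simp only: eq1 eq2)
  qed
  have bound: "\<And>z::int. 0 \<le> z \<Longrightarrow> z \<le> 2 * (int n + 1) \<Longrightarrow> 0 \<le> of_int z * ?t / 2 \<and> of_int z * ?t / 2 \<le> pi"
  proof -
    fix z :: int assume z: "0 \<le> z" "z \<le> 2 * (int n + 1)"
    have "of_int z * ?t \<le> of_int (2 * (int n + 1)) * ?t"
      using z t0 by (intro mult_right_mono) auto
    also have "\<dots> = 2 * pi" using tm by (simp add: algebra_simps)
    finally show "0 \<le> of_int z * ?t / 2 \<and> of_int z * ?t / 2 \<le> pi" using z t0 by simp
  qed
  have s: "0 \<le> sin (of_int (a + d) * ?t / 2)"
    using bound[of "a+d"] assms by (intro sin_ge_zero) auto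
  have c: "cos (of_int (d - a) * ?t / 2) \<le> cos (of_int (c - b) * ?t / 2)"
  proof (rule cos_monotone_0_pi_le)
    show "0 \<le> of_int (c - b) * ?t / 2" using bound[of "c - b"] assms by auto
    have "(of_int (c - b) :: real) \<le> of_int (d - a)" using assms by simp
    then have "of_int (c - b) * ?t \<le> of_int (d - a) * ?t" using mult_right_mono t0 by auto
    then show "of_int (c - b) * ?t / 2 \<le> of_int (d - a) * ?t / 2" by simp
    show "of_int (d - a) * ?t / 2 \<le> pi" using bound[of "d - a"] assms by auto
  qed
  have "2 * sin (of_int (a + d) * ?t / 2) * cos (of_int (d - a) * ?t / 2)
      \<le> 2 * sin (of_int (a + d) * ?t / 2) * cos (of_int (c - b) * ?t / 2)"
    using s c by (simp add: mult_left_mono)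
  then show ?thesis unfolding ad bc assms(4) .
qed

lemma fi_mono:
  assumes "0 \<le> i" "i \<le> j" "i + j \<le> int n + 1"
  shows "fi n i \<le> fi n j"
proof -
  let ?t = "th n"
  have t0: "0 < ?t" by (rule th_pos)
  have tm: "real (n+1) * ?t = pi" by (rule th_mult)
  have e: "fi n j - fi n i = 2 * sin (of_int (j - i) * ?t / 2) * cos (of_int (j + i) * ?t / 2)"
    unfolding fi_def sin_diff_sin by (simp add: algebra_simps)
  have up: "of_int (j + i) * ?t \<le> pi"
  proof -
    have "of_int (j + i) * ?t \<le> of_int (int n + 1) * ?t"
      using assms t0 by (intro mult_right_mono) auto
    moreover have "of_int (int n + 1) * ?t = pi" using tm by (simp add: algebra_simps)
    ultimately show ?thesis by (rule ord_le_eq_trans)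
  qed
  have "0 \<le> sin (of_int (j - i) * ?t / 2)"
  proof (rule sin_ge_zero)
    show "0 \<le> of_int (j - i) * ?t / 2" using assms t0 by simp
    have "of_int (j - i) * ?t \<le> of_int (j + i) * ?t" using assms t0 by (intro mult_right_mono) auto
    then show "of_int (j - i) * ?t / 2 \<le> pi" using up pi_gt_zero by linarith
  qed
  moreover have "0 \<le> cos (of_int (j + i) * ?t / 2)"
  proof (rule cos_ge_zero)
    show "- (pi / 2) \<le> of_int (j + i) * ?t / 2" using assms t0 pi_gt_zero
      by (smt (verit) divide_nonneg_pos of_int_nonneg zero_le_mult_iff)
    show "of_int (j + i) * ?t / 2 \<le> pi / 2" using up by simp
  qed
  ultimately have "0 \<le> fi n j - fi n i" unfolding e by simp
  then show ?thesis by simp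
qed

lemma typeI_core:
  fixes p k :: nat
  assumes p2: "2 \<le> p" and q: "p + 2*k + 1 \<le> n"
  shows "Es n (int p - int k - 1) (4*k+3) + Es n (int p + int k) k + Es n (int p + 1) k
           \<le> TT n * Es n (int p) (2*k+1)"
proof -
  define P where "P = int p"
  define K where "K = int k"
  define A where "A = P - K - 1"
  define X where "X = P + K"
  define Q where "Q = P + 2*K"
  have s1: "Es n A (4*k+3) = Es n A k + Es n (P-1) (2*k+3) + Es n (Q+2) k"
  proof -
    have "Es n A (4*k+3) = Es n A (k + ((2*k+3) + k))" by (simp add: algebra_simps)
    also have "\<dots> = Es n A k + (Es n (A + int k) (2*k+3) + Es n (A + int k + int (2*k+3)) k)"
      by (simp only: Es_split)
    also have "A + int k = P - 1" unfolding A_def K_def by simp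
    also have "P - 1 + int (2*k+3) = Q + 2" unfolding Q_def K_def by simp
    finally show ?thesis by simp
  qed
  have s2: "Es n (P-1) (2*k+3) = fi n (P-1) + Es n P (2*k+1) + fi n (Q+1)"
  proof -
    have e: "2*k+3 = Suc (Suc (2*k+1))" by simp
    have "Es n (P-1) (2*k+3) = Es n (P-1) (Suc (Suc (2*k+1)))" by (simp only: e)
    also have "\<dots> = fi n (P-1) + Es n P (Suc (2*k+1))" by (simp add: Es_Suc_left)
    also have "\<dots> = fi n (P-1) + (Es n P (2*k+1) + fi n (P + int (2*k+1)))" by (simp only: Es_Suc_right)
    also have "P + int (2*k+1) = Q + 1" unfolding Q_def K_def by simp
    finally show ?thesis by simp
  qed
  have s3: "Es n (P-1) (2*k+1) = fi n (P-1) + Es n P k + Es n X k"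
  proof -
    have a: "Es n (P-1) (2*k+1) = fi n (P-1) + Es n P (2*k)"
      using Es_Suc_left[of n "P-1" "2*k"] by simp
    have b: "Es n P (2*k) = Es n P k + Es n (P + int k) k"
      using Es_split[of n P k k] by (simp add: mult_2)
    show ?thesis using a b unfolding X_def K_def by simp
  qed
  have s4: "Es n (P+1) (2*k+1) = Es n (P+1) k + Es n (X+1) k + fi n (Q+1)"
  proof -
    have a: "Es n (P+1) (2*k+1) = Es n (P+1) (2*k) + fi n (P + 1 + int (2*k))"
      using Es_Suc_right[of n "P+1" "2*k"] by simp
    have b: "Es n (P+1) (2*k) = Es n (P+1) k + Es n (P + 1 + int k) k"
      using Es_split[of n "P+1" k k] by (simp add: mult_2)
    have c: "P + 1 + int k = X + 1" "P + 1 + int (2*k) = Q + 1" unfolding X_def Q_def K_def by simp_all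
    show ?thesis using a b unfolding c by simp
  qed
  have s5: "Es n (P-1) (2*k+1) + Es n P (2*k+1) + Es n (P+1) (2*k+1) = TT n * Es n P (2*k+1)"
    by (rule Es_eigen)
  have s6: "Es n A k + Es n (Q+2) k \<le> Es n P k + Es n (X+1) k"
  proof -
    have eA: "Es n A k = (\<Sum>i<k. fi n (P - 2 - int i))"
      using Es_rev[of n "P - 2" k] unfolding A_def K_def by (simp add: algebra_simps)
    have eX: "Es n (X+1) k = (\<Sum>i<k. fi n (Q - int i))"
      using Es_rev[of n Q k] unfolding X_def Q_def K_def by (simp add: algebra_simps)
    have "(\<Sum>i<k. fi n (P - 2 - int i) + fi n (Q + 2 + int i)) \<le> (\<Sum>i<k. fi n (P + int i) + fi n (Q - int i))"
    proof (rule sum_mono)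
      fix i assume i: "i \<in> {..<k}"
      show "fi n (P - 2 - int i) + fi n (Q + 2 + int i) \<le> fi n (P + int i) + fi n (Q - int i)"
        by (rule fi_pair) (use i q p2 in \<open>auto simp: P_def Q_def K_def\<close>)
    qed
    then show ?thesis unfolding eA eX unfolding Es_def by (simp add: sum.distrib algebra_simps)
  qed
  have "Es n A (4*k+3) + Es n X k + Es n (P+1) k \<le> TT n * Es n P (2*k+1)"
    using s1 s2 s3 s4 s5 s6 by linarith
  then show ?thesis unfolding A_def X_def P_def K_def .
qed

lemma typeI:
  fixes p k :: nat
  assumes p2: "2 \<le> p" and q: "p + 2*k + 1 \<le> n"
  shows "meas (sn n) (ball_L n (p+k) (2*k+1)) \<le> TT n * meas (sn n) (ball_L n (p+k) k)"
proof -
  define P where "P = int p"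
  define K where "K = int k"
  define A where "A = P - K - 1"
  define lo where "lo = max 1 (p + k - (2*k+1))"
  define hi where "hi = min n (p + k + (2*k+1))"
  define cl where "cl = k + 2 - p"
  define cr where "cr = p + 3*k + 1 - n"
  define mid where "mid = 4*k + 3 - cl - cr"
  have clk: "cl \<le> k" and crk: "cr \<le> k" unfolding cl_def cr_def using p2 q by auto
  have bN: "ball_L n (p+k) k = {p..p+2*k}" unfolding ball_L_eq using p2 q by auto
  have mN: "meas (sn n) (ball_L n (p+k) k) = Es n P (2*k+1)"
    unfolding bN P_def by (subst meas_interval) (auto simp: algebra_simps)
  have bO: "ball_L n (p+k) (2*k+1) = {lo..hi}" unfolding ball_L_eq lo_def hi_def ..
  have lohi: "lo \<le> hi + 1" unfolding lo_def hi_def using q by auto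
  have midv: "hi + 1 - lo = mid" unfolding hi_def lo_def mid_def cl_def cr_def using p2 q by auto
  have lov: "int lo = A + int cl" unfolding lo_def A_def cl_def P_def K_def using p2 q by auto
  have mO: "meas (sn n) (ball_L n (p+k) (2*k+1)) = Es n (A + int cl) mid"
    unfolding bO using meas_interval[OF lohi, of n] midv lov by simp
  have split: "Es n A (4*k+3) = Es n A cl + Es n (A + int cl) mid + Es n (A + int cl + int mid) cr"
  proof -
    have "4*k+3 = cl + (mid + cr)" unfolding mid_def using clk crk by simp
    then have "Es n A (4*k+3) = Es n A (cl + (mid + cr))" by simp
    also have "\<dots> = Es n A cl + (Es n (A + int cl) mid + Es n (A + int cl + int mid) cr)"
      by (simp only: Es_split)
    finally show ?thesis by simp
  qed
  have left: "Es n A cl = - Es n 0 cl"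
  proof (cases "cl = 0")
    case True then show ?thesis by simp
  next
    case False
    then have "A = 1 - int cl" unfolding A_def cl_def P_def K_def by auto
    then show ?thesis using Es_neg by simp
  qed
  have right: "Es n (A + int cl + int mid) cr = - Es n 0 cr"
  proof (cases "cr = 0")
    case True then show ?thesis by simp
  next
    case False
    then have "hi = n" unfolding hi_def cr_def by auto
    then have "A + int cl + int mid = int n + 1" using lov midv lohi by linarith
    then show ?thesis using Es_endneg by simp
  qed
  have lb: "Es n 0 cl \<le> Es n (P+1) k"
  proof -
    have "Es n 0 cl \<le> Es n (P+1) cl" unfolding Es_def
    proof (rule sum_mono)
      fix i assume i: "i \<in> {..<cl}"
      show "fi n (0 + int i) \<le> fi n (P + 1 + int i)"
        by (rule fi_mono) (use i q p2 in \<open>auto simp: P_def cl_def\<close>)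
    qed
    also have "\<dots> \<le> Es n (P+1) k" unfolding Es_def
    proof (rule sum_mono2)
      show "finite {..<k}" by simp
      show "{..<cl} \<subseteq> {..<k}" using clk by auto
      fix i assume "i \<in> {..<k} - {..<cl}"
      then show "0 \<le> fi n (P + 1 + int i)" using q by (intro fi_nonneg) (auto simp: P_def)
    qed
    finally show ?thesis .
  qed
  have rb: "Es n 0 cr \<le> Es n (P + K) k"
  proof -
    have eX: "Es n (P+K) k = (\<Sum>i<k. fi n (P + 2*K - 1 - int i))"
      using Es_rev[of n "P + 2*K - 1" k] unfolding K_def by (simp add: algebra_simps)
    have "Es n 0 cr \<le> (\<Sum>i<cr. fi n (P + 2*K - 1 - int i))" unfolding Es_def
    proof (rule sum_mono)
      fix i assume i: "i \<in> {..<cr}"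
      show "fi n (0 + int i) \<le> fi n (P + 2*K - 1 - int i)"
        by (rule fi_mono) (use i q p2 in \<open>auto simp: P_def K_def cr_def\<close>)
    qed
    also have "\<dots> \<le> (\<Sum>i<k. fi n (P + 2*K - 1 - int i))"
    proof (rule sum_mono2)
      show "finite {..<k}" by simp
      show "{..<cr} \<subseteq> {..<k}" using crk by auto
      fix i assume "i \<in> {..<k} - {..<cr}"
      then show "0 \<le> fi n (P + 2*K - 1 - int i)" using q by (intro fi_nonneg) (auto simp: P_def K_def)
    qed
    finally show ?thesis unfolding eX .
  qed
  have core: "Es n A (4*k+3) + Es n (P + K) k + Es n (P + 1) k \<le> TT n * Es n P (2*k+1)"
    using typeI_core[OF p2 q] unfolding A_def P_def K_def .
  have "meas (sn n) (ball_L n (p+k) (2*k+1)) = Es n A (4*k+3) + Es n 0 cl + Es n 0 cr"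
    using mO split left right by linarith
  also have "\<dots> \<le> TT n * Es n P (2*k+1)" using core lb rb by linarith
  finally show ?thesis unfolding mN .
qed

lemma K_part:
  assumes n3: "3 \<le> n"
  shows "\<exists>k. 3*k+3 \<le> n \<and> (\<forall>\<mu>. doubling_minimizer n \<mu> \<longrightarrow>
            meas \<mu> (ball_L n 1 (2*k+1)) = doubling_const_graph n * meas \<mu> (ball_L n 1 k))"
proof -
  let ?C = "doubling_const_graph n"
  have n1: "1 \<le> n" using n3 by simp
  have CT: "TT n \<le> ?C" by (rule dcg_lower[OF n1])
  show ?thesis
  proof (cases "?C = TT n")
    case True
    show ?thesis
    proof (rule exI[where x=0], intro conjI allI impI)
      show "3*0+3 \<le> n" using n3 by simp
      fix \<mu> assume m: "doubling_minimizer n \<mu>"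
      have mm: "is_measure n \<mu>" using m unfolding doubling_minimizer_def by blast
      have f: "feas n (TT n) \<mu>" using min_feas[OF m] True by simp
      have one: "1 \<in> {1..n}" using n1 by simp
      have "meas \<mu> (ball_L n 1 1) = TT n * \<mu> 1" by (rule perron_eq[OF n1 mm f one])
      then show "meas \<mu> (ball_L n 1 (2*0+1)) = ?C * meas \<mu> (ball_L n 1 0)"
        using True ball0_eq[OF one] by simp
    qed
  next
    case False
    then have CgT: "TT n < ?C" using CT by simp
    show ?thesis
    proof (rule ccontr)
      assume "\<not> ?thesis"
      then have H: "\<forall>k. 3*k+3 \<le> n \<longrightarrow> (\<exists>\<mu>. doubling_minimizer n \<mu> \<and>
            meas \<mu> (ball_L n 1 (2*k+1)) \<noteq> ?C * meas \<mu> (ball_L n 1 k))" by blast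
      define KS where "KS = {k. 3*k+3 \<le> n}"
      define F where "F = (\<lambda>k. (1::nat, k)) ` KS"
      have KSfin: "finite KS" unfolding KS_def by (rule finite_subset[of _ "{..n}"]) auto
      have finF: "finite F" unfolding F_def using KSfin by simp
      have "0 \<in> KS" unfolding KS_def using n3 by simp
      then have neF: "F \<noteq> {}" unfolding F_def by blast
      have one: "(1::nat) \<in> {1..n}" using n1 by simp
      have subF: "\<forall>c\<in>F. fst c \<in> {1..n}" unfolding F_def using one by auto
      have exF: "\<forall>c\<in>F. \<exists>\<mu>. doubling_minimizer n \<mu> \<and> strict n ?C \<mu> (fst c) (snd c)"
      proof
        fix c assume "c \<in> F"
        then obtain k where k: "k \<in> KS" "c = (1,k)" unfolding F_def by blast
        then obtain \<mu> where m: "doubling_minimizer n \<mu>" "meas \<mu> (ball_L n 1 (2*k+1)) \<noteq> ?C * meas \<mu> (ball_L n 1 k)"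
          using H unfolding KS_def by blast
        have "meas \<mu> (ball_L n 1 (2*k+1)) \<le> ?C * meas \<mu> (ball_L n 1 k)"
          using min_feas[OF m(1)] one unfolding feas_def by blast
        then have "strict n ?C \<mu> 1 k" using m(2) unfolding strict_def by simp
        then show "\<exists>\<mu>. doubling_minimizer n \<mu> \<and> strict n ?C \<mu> (fst c) (snd c)" using m(1) k by auto
      qed
      obtain \<sigma>0 where s0: "doubling_minimizer n \<sigma>0" "\<forall>c\<in>F. strict n ?C \<sigma>0 (fst c) (snd c)"
        using combine[OF n1 finF neF subF exF] by blast
      define \<sigma> where "\<sigma> = madd \<sigma>0 (rflm n \<sigma>0)"
      have smin: "doubling_minimizer n \<sigma>" unfolding \<sigma>_def by (rule min_madd[OF n1 s0(1) min_rfl[OF n1 s0(1)]])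
      have ssym: "\<forall>v\<in>{1..n}. \<sigma> (n+1-v) = \<sigma> v" unfolding \<sigma>_def by (rule symmetrize_sym)
      have s1: "strict n ?C \<sigma> 1 k" if "k \<in> KS" for k
      proof -
        have "(1,k) \<in> F" unfolding F_def using that by blast
        then have "strict n ?C \<sigma>0 1 k" using s0(2) by auto
        then show ?thesis unfolding \<sigma>_def
          using strict_madd[OF _ feas_rfl[OF min_feas[OF s0(1)]] one] by blast
      qed
      have sn': "strict n ?C \<sigma> n k" if "k \<in> KS" for k
      proof -
        have "strict n ?C \<sigma> (n+1-1) k \<longleftrightarrow> strict n ?C \<sigma> 1 k" by (rule strict_sym[OF ssym one])
        then show ?thesis using s1[OF that] by simp
      qed
      define F2 where "F2 = F \<union> (\<lambda>k. (n, k)) ` KS"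
      have "finite F2" unfolding F2_def using finF KSfin by simp
      moreover have "\<forall>c\<in>F2. strict n ?C \<sigma> (fst c) (snd c)" unfolding F2_def F_def using s1 sn' by auto
      ultimately obtain t where t: "t > 0" "\<forall>c\<in>F2. strict n ?C (pert \<sigma> t (sn n)) (fst c) (snd c)"
        using perturb by blast
      let ?\<nu> = "pert \<sigma> t (sn n)"
      have smeas: "is_measure n \<sigma>" using smin unfolding doubling_minimizer_def by blast
      have numeas: "is_measure n ?\<nu>" by (rule is_measure_pert[OF smeas sn_measure t(1)])
      have nusym: "\<forall>v\<in>{1..n}. ?\<nu> (n+1-v) = ?\<nu> v" by (rule pert_sym[OF ssym sn_sym_all])
      have sfeas: "feas n ?C \<sigma>" by (rule min_feas[OF smin])
      have sine_ok: "strict n ?C ?\<nu> x k"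
        if x: "x \<in> {1..n}" and le: "meas (sn n) (ball_L n x (2*k+1)) \<le> TT n * meas (sn n) (ball_L n x k)" for x k
      proof -
        have "0 < meas (sn n) (ball_L n x k)" by (rule meas_pos[OF sn_measure x])
        then have "TT n * meas (sn n) (ball_L n x k) < ?C * meas (sn n) (ball_L n x k)"
          using CgT by simp
        then show ?thesis using le by (intro mediant[OF sfeas x _ t(1)]) linarith
      qed
      have leftcase: "strict n ?C ?\<nu> x k" if x: "x \<in> {1..n}" and xk: "x \<le> k+1" and m: "x + k < n" for x k
      proof (cases "3*(x+k) \<le> n")
        case True
        define m where "m = x + k"
        have m1: "1 \<le> m" using x unfolding m_def by simp
        have "m - 1 \<in> KS" unfolding KS_def m_def using True m1 unfolding m_def by auto
        then have "(1, m-1) \<in> F2" unfolding F2_def F_def by blast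
        then have st: "strict n ?C ?\<nu> 1 (m-1)" using t(2) by auto
        have bN: "ball_L n x k = ball_L n 1 (m-1)" unfolding ball_L_eq m_def using xk m1 m_def by auto
        have bO: "ball_L n x (2*k+1) \<subseteq> ball_L n 1 (2*(m-1)+1)" unfolding ball_L_eq m_def using x m1 m_def by auto
        have "meas ?\<nu> (ball_L n x (2*k+1)) \<le> meas ?\<nu> (ball_L n 1 (2*(m-1)+1))"
          by (rule meas_mono[OF numeas bO ball_sub])
        also have "\<dots> < ?C * meas ?\<nu> (ball_L n 1 (m-1))" using st unfolding strict_def .
        finally show ?thesis unfolding strict_def bN .
      next
        case False
        then have "n+1 \<le> 3*(x+k)" by simp
        then show ?thesis using sine_ok[OF x left_sine[OF n3 x xk m]] by blast
      qed
      have "\<forall>x\<in>{1..n}. \<forall>k\<le>n. strict n ?C ?\<nu> x k"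
      proof (intro ballI allI impI)
        fix x k assume x: "x \<in> {1..n}" and "k \<le> n"
        show "strict n ?C ?\<nu> x k"
        proof (cases "x \<le> k+1")
          case True
          show ?thesis
          proof (cases "x + k < n")
            case True
            then show ?thesis using leftcase[OF x \<open>x \<le> k+1\<close>] by blast
          next
            case False
            have bN: "ball_L n x k = {1..n}" unfolding ball_L_eq using \<open>x \<le> k+1\<close> False by auto
            have bO: "ball_L n x (2*k+1) = {1..n}" unfolding ball_L_eq using \<open>x \<le> k+1\<close> False by auto
            have p: "0 < meas ?\<nu> (ball_L n x k)" by (rule meas_pos[OF numeas x])
            have "1 < ?C" using CgT TT_bound(2)[OF n3] by linarith
            then have "meas ?\<nu> (ball_L n x k) < ?C * meas ?\<nu> (ball_L n x k)" using p by simp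
            then show ?thesis unfolding strict_def using bN bO by simp
          qed
        next
          case False
          show ?thesis
          proof (cases "x + k < n")
            case True
            define p where "p = x - k"
            have p2: "2 \<le> p" unfolding p_def using False by simp
            have pq: "p + 2*k + 1 \<le> n" unfolding p_def using False True by simp
            have xe: "p + k = x" unfolding p_def using False by simp
            show ?thesis using sine_ok[OF x typeI[OF p2 pq, unfolded xe]] .
          next
            case nk: False
            have x': "n+1-x \<in> {1..n}" using x by auto
            have "strict n ?C ?\<nu> (n+1-x) k" by (rule leftcase[OF x']) (use nk False x in auto)
            moreover have "strict n ?C ?\<nu> (n+1-(n+1-x)) k \<longleftrightarrow> strict n ?C ?\<nu> (n+1-x) k"
              by (rule strict_sym[OF nusym x'])
            moreover have "n+1-(n+1-x) = x" using x by auto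
            ultimately show ?thesis by simp
          qed
        qed
      qed
      then show False by (rule all_strict_False[OF n1 numeas])
    qed
  qed
qed

theorem theorem6p6:
  fixes n :: nat
  assumes "n \<ge> 3"
  shows "\<exists>j k :: nat.
           2 \<le> j \<and> int j \<le> \<lceil>real n / 2\<rceil> \<and>
           int k < \<lceil>(real n - 2) / 3\<rceil> \<and>
           (\<forall>\<mu>. doubling_minimizer n \<mu> \<longrightarrow>
              meas \<mu> (ball_L n j 1) / meas \<mu> (ball_L n j 0) =
                meas \<mu> (ball_L n 1 (2*k+1)) / meas \<mu> (ball_L n 1 k) \<and>
              meas \<mu> (ball_L n 1 (2*k+1)) / meas \<mu> (ball_L n 1 k) = doubling_const n \<mu>)"
proof -
  let ?C = "doubling_const_graph n"
  have n3: "3 \<le> n" using assms by simp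
  have n1: "1 \<le> n" using assms by simp
  obtain j where j1: "2 \<le> j" and j2: "2*j \<le> n+1"
    and jm: "\<forall>\<mu>. doubling_minimizer n \<mu> \<longrightarrow> meas \<mu> (ball_L n j 1) = ?C * meas \<mu> (ball_L n j 0)"
    using J_part[OF n3] by blast
  obtain k where k1: "3*k+3 \<le> n"
    and km: "\<forall>\<mu>. doubling_minimizer n \<mu> \<longrightarrow> meas \<mu> (ball_L n 1 (2*k+1)) = ?C * meas \<mu> (ball_L n 1 k)"
    using K_part[OF n3] by blast
  have jn: "j \<in> {1..n}" using j1 j2 by auto
  have one: "(1::nat) \<in> {1..n}" using n1 by simp
  have cj: "int j \<le> \<lceil>real n / 2\<rceil>"
  proof -
    have "real (2*j) \<le> real (n+1)" using j2 by (simp only: of_nat_le_iff)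
    then have "real j - 1 < real n / 2" by simp
    then show ?thesis unfolding le_ceiling_iff by simp
  qed
  have ck: "int k < \<lceil>(real n - 2) / 3\<rceil>"
  proof -
    have "real (3*k+3) \<le> real n" using k1 by (simp only: of_nat_le_iff)
    then have "real k < (real n - 2) / 3" by simp
    then show ?thesis unfolding less_ceiling_iff by simp
  qed
  have main: "meas \<mu> (ball_L n j 1) / meas \<mu> (ball_L n j 0) =
                meas \<mu> (ball_L n 1 (2*k+1)) / meas \<mu> (ball_L n 1 k) \<and>
              meas \<mu> (ball_L n 1 (2*k+1)) / meas \<mu> (ball_L n 1 k) = doubling_const n \<mu>"
    if m: "doubling_minimizer n \<mu>" for \<mu>
  proof -
    have mm: "is_measure n \<mu>" and dc: "doubling_const n \<mu> = ?C"
      using m unfolding doubling_minimizer_def by auto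
    have p1: "0 < meas \<mu> (ball_L n j 0)" by (rule meas_pos[OF mm jn])
    have p2: "0 < meas \<mu> (ball_L n 1 k)" by (rule meas_pos[OF mm one])
    have e1: "meas \<mu> (ball_L n j 1) / meas \<mu> (ball_L n j 0) = ?C" using jm m p1 by simp
    have e2: "meas \<mu> (ball_L n 1 (2*k+1)) / meas \<mu> (ball_L n 1 k) = ?C" using km m p2 by simp
    show ?thesis using e1 e2 dc by simp
  qed
  show ?thesis using j1 cj ck main by blast
qed

end
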